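(* For every $\varepsilon>0$ and every integer $k\ge 2$, there exists a $C_{2k}$-free graph $G$ such that every bipartite subgraph of $G$ whose girth is greater than $2k$ has at most $\left(1-\frac{1}{2^{2k-2}}\right)\frac{2}{2k-1}\,e(G)\,(1+\varepsilon)$ edges.
   Context: $e(G)$ denotes the number of edges of a graph $G$. A graph is $C_{2k}$-free if it contains no cycle of length $2k$ as a subgraph. The girth of a graph is the length of a shortest cycle, and infinity if the graph has no cycle. *)

theory Defs
  imports Complex_Main
begin

definition simple_graph :: "'a set \<Rightarrow> 'a set set \<Rightarrow> bool" where
  "simple_graph V E \<longleftrightarrow> finite V \<and> (\<forall>e\<in>E. e \<subseteq> V \<and> card e = 2)"

definition is_cycle :: "'a set set \<Rightarrow> 'a list \<Rightarrow> bool" where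
  "is_cycle E vs \<longleftrightarrow> length vs \<ge> 3 \<and> distinct vs \<and>
     (\<forall>i < length vs. {vs ! i, vs ! ((i + 1) mod length vs)} \<in> E)"

definition cycle_free_len :: "'a set set \<Rightarrow> nat \<Rightarrow> bool" where
  "cycle_free_len E L \<longleftrightarrow> \<not> (\<exists>vs. is_cycle E vs \<and> length vs = L)"

definition girth_gt :: "'a set set \<Rightarrow> nat \<Rightarrow> bool" where
  "girth_gt E g \<longleftrightarrow> (\<forall>vs. is_cycle E vs \<longrightarrow> length vs > g)"

definition bipartite :: "'a set \<Rightarrow> 'a set set \<Rightarrow> bool" where
  "bipartite V H \<longleftrightarrow> (\<exists>A \<subseteq> V. \<forall>e\<in>H. card (e \<inter> A) = 1)"

end

theory Submission
  imports Defs "HOL-Library.FuncSet"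
begin

definition is_path :: "'a set set \<Rightarrow> 'a list \<Rightarrow> bool" where
  "is_path F P \<longleftrightarrow> P \<noteq> [] \<and> distinct P \<and> (\<forall>l. l + 1 < length P \<longrightarrow> {P!l, P!(l+1)} \<in> F)"

lemma is_cycle_mono: "is_cycle F vs \<Longrightarrow> F \<subseteq> G \<Longrightarrow> is_cycle G vs"
  unfolding is_cycle_def by blast

lemma leaf_exists:
  assumes fin: "finite W" and FW: "\<forall>e\<in>F. e \<subseteq> W \<and> card e = 2"
    and acyc: "\<forall>vs. \<not> is_cycle F vs" and ne: "F \<noteq> {}"
  shows "\<exists>v w. v \<in> W \<and> w \<in> W \<and> v \<noteq> w \<and> (\<forall>e\<in>F. v \<in> e \<longrightarrow> e = {v, w})"
proof -
  obtain e where e: "e \<in> F" using ne by blast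
  then obtain u v where uv: "e = {u, v}" "u \<noteq> v" using FW card_2_iff by metis
  have uvW: "u \<in> W" "v \<in> W" using e uv FW by auto
  define Q where "Q = (\<lambda>P. is_path F P \<and> set P \<subseteq> W)"
  have Quv: "Q [u, v]" using e uv uvW unfolding Q_def is_path_def by simp
  have bnd: "\<forall>P. Q P \<longrightarrow> length P < Suc (card W)"
  proof (intro allI impI)
    fix P assume P: "Q P"
    then have "length P = card (set P)" unfolding Q_def is_path_def by (simp add: distinct_card)
    also have "\<dots> \<le> card W" using P fin unfolding Q_def by (simp add: card_mono)
    finally show "length P < Suc (card W)" by simp
  qed
  obtain P where P: "Q P" and Pmax: "\<forall>P'. Q P' \<longrightarrow> length P' \<le> length P"
    using ex_has_greatest_nat[of Q "[u,v]" length "Suc (card W)"] Quv bnd by blast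
  have n2: "length P \<ge> 2" using Pmax Quv by force
  define n where "n = length P"
  define x where "x = P ! (n - 1)"
  define y where "y = P ! (n - 2)"
  have Pd: "distinct P" and Pe: "\<And>l. l + 1 < n \<Longrightarrow> {P!l, P!(l+1)} \<in> F" and PW: "set P \<subseteq> W"
    using P unfolding Q_def is_path_def n_def by auto
  have xW: "x \<in> W" and yW: "y \<in> W" using PW n2 unfolding x_def y_def n_def by auto
  have xy: "x \<noteq> y" using Pd n2 unfolding x_def y_def n_def by (simp add: nth_eq_iff_index_eq)
  have leaf: "\<forall>e\<in>F. x \<in> e \<longrightarrow> e = {x, y}"
  proof (intro ballI impI)
    fix e assume eF: "e \<in> F" and xe: "x \<in> e"
    obtain w where ew: "e = {x, w}" "w \<noteq> x"
    proof -
      obtain a b where "e = {a,b}" "a \<noteq> b" using FW eF card_2_iff by metis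
      then show ?thesis using xe that by blast
    qed
    have wW: "w \<in> W" using FW eF ew by auto
    show "e = {x, y}"
    proof (cases "w \<in> set P")
      case False
      have "Q (P @ [w])"
        unfolding Q_def is_path_def
      proof (intro conjI allI impI)
        show "P @ [w] \<noteq> []" by simp
        show "distinct (P @ [w])" using Pd False by simp
        show "set (P @ [w]) \<subseteq> W" using PW wW by simp
        fix l assume l: "l + 1 < length (P @ [w])"
        show "{(P @ [w]) ! l, (P @ [w]) ! (l + 1)} \<in> F"
        proof (cases "l + 1 < n")
          case True then show ?thesis using Pe[OF True] by (simp add: nth_append n_def)
        next
          case False
          then have "l = n - 1" using l n_def by simp
          have "l < length P" using \<open>l = n - 1\<close> n2 unfolding n_def by simp
          then have a: "(P @ [w]) ! l = x" using \<open>l = n - 1\<close> unfolding x_def n_def by (simp add: nth_append)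
          have "l + 1 = length P" using \<open>l = n - 1\<close> n2 unfolding n_def by simp
          then have b: "(P @ [w]) ! (l + 1) = w" by (simp add: nth_append)
          show ?thesis using eF ew a b by simp
        qed
      qed
      then show ?thesis using Pmax by fastforce
    next
      case True
      then obtain i where i: "i < n" "P ! i = w" unfolding n_def by (auto simp: in_set_conv_nth)
      have "i \<noteq> n - 1" using i ew unfolding x_def by auto
      show ?thesis
      proof (cases "i = n - 2")
        case True then show ?thesis using ew i unfolding y_def by simp
      next
        case False
        with \<open>i \<noteq> n - 1\<close> i have i3: "i + 3 \<le> n" by linarith
        define C where "C = drop i P"
        have lenC: "length C = n - i" unfolding C_def n_def by simp
        have "is_cycle F C"
          unfolding is_cycle_def
        proof (intro conjI allI impI)
          show "3 \<le> length C" using lenC i3 by simp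
          show "distinct C" using Pd unfolding C_def by simp
          fix l assume l: "l < length C"
          show "{C ! l, C ! ((l + 1) mod length C)} \<in> F"
          proof (cases "l + 1 < length C")
            case True
            then have "{P!(i+l), P!(i+l+1)} \<in> F" using Pe lenC by simp
            then show ?thesis using True i unfolding C_def n_def by simp
          next
            case False
            then have ll: "l = n - i - 1" using l lenC by simp
            then have "l + 1 = length C" using lenC i3 by simp
            then have "(l + 1) mod length C = 0" by simp
            moreover have "C ! l = x" using ll i3 unfolding C_def x_def n_def by simp
            moreover have "C ! 0 = w" using i unfolding C_def n_def by simp
            ultimately show ?thesis using eF ew by simp
          qed
        qed
        then show ?thesis using acyc by blast
      qed
    qed
  qed
  show ?thesis using xW yW xy leaf by blast
qed

lemma forest_bound:
  "finite W \<Longrightarrow> \<forall>e\<in>F. e \<subseteq> W \<and> card e = 2 \<Longrightarrow> \<forall>vs. \<not> is_cycle F vs \<Longrightarrow> card F \<le> card W - 1"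
proof (induction "card W" arbitrary: W F rule: less_induct)
  case less
  show ?case
  proof (cases "F = {}")
    case True then show ?thesis by simp
  next
    case False
    obtain v w where vw: "v \<in> W" "w \<in> W" "v \<noteq> w" "\<forall>e\<in>F. v \<in> e \<longrightarrow> e = {v, w}"
      using leaf_exists[OF less.prems False] by blast
    define F' where "F' = {e\<in>F. v \<notin> e}"
    have sub: "F \<subseteq> insert {v, w} F'" using vw unfolding F'_def by blast
    have F'W: "\<forall>e\<in>F'. e \<subseteq> W - {v} \<and> card e = 2" using less.prems(2) unfolding F'_def by blast
    have acF': "\<forall>vs. \<not> is_cycle F' vs" using less.prems(3) is_cycle_mono unfolding F'_def
      by (metis (no_types, lifting) mem_Collect_eq subsetI)
    have lt: "card (W - {v}) < card W" using card_Diff1_less[OF less.prems(1) vw(1)] .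
    have IH: "card F' \<le> card (W - {v}) - 1"
      using less.hyps[OF lt _ F'W acF'] less.prems(1) by simp
    have finF': "finite F'"
    proof -
      have "F' \<subseteq> Pow W" using F'W by blast
      then show ?thesis using less.prems(1) finite_subset by blast
    qed
    have "card F \<le> card (insert {v, w} F')" using sub finF' by (simp add: card_mono)
    also have "\<dots> \<le> card F' + 1" using finF' by (simp add: card_insert_if)
    also have "\<dots> \<le> card W - 1"
    proof -
      have "card W \<ge> 2" using vw less.prems(1)
        by (metis card_2_iff card_mono empty_subsetI insert_subset)
      then show ?thesis using IH vw less.prems(1) by simp
    qed
    finally show ?thesis .
  qed
qed



definition wit :: "(nat \<Rightarrow> 'a set) \<Rightarrow> nat list \<Rightarrow> 'a list \<Rightarrow> bool" where
  "wit K is ws \<longleftrightarrow> length is = length ws \<and> distinct ws \<and>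
     (\<forall>l<length is. ws!l \<in> K (is!l) \<and> ws!((l+1) mod length is) \<in> K (is!l))"

lemma wit_segment:
  assumes w: "wit K is ws" and ab: "a + d < length is" and d2: "2 \<le> d" and eq: "is!a = is!(a+d)"
    and mind: "\<forall>a' d'. 0 < d' \<longrightarrow> d' < d \<longrightarrow> a' + d' < length is \<longrightarrow> is!a' \<noteq> is!(a'+d')"
  shows "\<exists>is' ws'. wit K is' ws' \<and> distinct is' \<and> 2 \<le> length is' \<and> length is' \<le> length is \<and> set is' \<subseteq> set is"
proof -
  define j where "j = length is"
  have lw: "length ws = j" and dw: "distinct ws"
    and c: "\<And>l. l < j \<Longrightarrow> ws!l \<in> K (is!l) \<and> ws!((l+1) mod j) \<in> K (is!l)"
    using w unfolding wit_def j_def by auto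
  define is' where "is' = map (\<lambda>l. is!(a+l)) [0..<d]"
  define ws' where "ws' = map (\<lambda>l. if l = 0 then ws!(a+d) else ws!(a+l)) [0..<d]"
  have "distinct is'"
    unfolding is'_def distinct_map
  proof
    show "inj_on (\<lambda>l. is ! (a + l)) (set [0..<d])"
    proof (rule inj_onI)
      fix x y assume x: "x \<in> set [0..<d]" and y: "y \<in> set [0..<d]" and e: "is ! (a + x) = is ! (a + y)"
      show "x = y"
      proof (rule ccontr)
        assume "x \<noteq> y"
        then consider "x < y" | "y < x" by linarith
        then show False
        proof cases
          case 1
          have "is!(a+x) \<noteq> is!(a+x+(y-x))" using 1 x y ab by (intro mind[rule_format]) auto
          then show False using 1 e by simp
        next
          case 2
          have "is!(a+y) \<noteq> is!(a+y+(x-y))" using 2 x y ab by (intro mind[rule_format]) auto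
          then show False using 2 e by simp
        qed
      qed
    qed
  qed simp
  moreover have "wit K is' ws'"
    unfolding wit_def
  proof (intro conjI allI impI)
    show "length is' = length ws'" unfolding is'_def ws'_def by simp
    show "distinct ws'"
      unfolding ws'_def distinct_map
    proof
      show "inj_on (\<lambda>l. if l = 0 then ws ! (a + d) else ws ! (a + l)) (set [0..<d])"
      proof (rule inj_onI)
        fix x y assume x: "x \<in> set [0..<d]" and y: "y \<in> set [0..<d]"
          and e: "(if x = 0 then ws ! (a + d) else ws ! (a + x)) = (if y = 0 then ws ! (a + d) else ws ! (a + y))"
        have inj: "\<And>p q. p < j \<Longrightarrow> q < j \<Longrightarrow> ws!p = ws!q \<Longrightarrow> p = q"
          using dw lw by (simp add: nth_eq_iff_index_eq)
        show "x = y"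
        proof (cases "x = 0"; cases "y = 0")
          assume "x = 0" "y \<noteq> 0"
          then have "a + d = a + y" using inj[of "a+d" "a+y"] e x y ab unfolding j_def by simp
          then show ?thesis using y by simp
        next
          assume "x \<noteq> 0" "y = 0"
          then have "a + x = a + d" using inj[of "a+x" "a+d"] e x y ab unfolding j_def by simp
          then show ?thesis using x by simp
        next
          assume "x \<noteq> 0" "y \<noteq> 0"
          then have "a + x = a + y" using inj[of "a+x" "a+y"] e x y ab unfolding j_def by simp
          then show ?thesis by simp
        qed simp
      qed
    qed simp
    fix l assume l: "l < length is'"
    then have ld: "l < d" unfolding is'_def by simp
    have lis: "length is' = d" unfolding is'_def by simp
    have i1: "is' ! l = is ! (a + l)" using ld unfolding is'_def by simp
    show "ws' ! l \<in> K (is' ! l)"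
    proof (cases "l = 0")
      case True
      have "ws!(a+d) \<in> K (is!(a+d))" using c ab unfolding j_def by simp
      then show ?thesis using True i1 eq ld unfolding ws'_def by simp
    next
      case False
      then show ?thesis using c[of "a+l"] ab ld i1 unfolding ws'_def j_def by simp
    qed
    show "ws' ! ((l + 1) mod length is') \<in> K (is' ! l)"
    proof (cases "l + 1 < d")
      case True
      have "(a + l + 1) mod j = a + l + 1" using True ab unfolding j_def by simp
      then have "ws!(a+l+1) \<in> K (is!(a+l))" using c[of "a+l"] True ab unfolding j_def by simp
      then show ?thesis using True i1 lis unfolding ws'_def by simp
    next
      case False
      then have ld1: "l + 1 = d" using ld by simp
      have "(a + l + 1) mod j = a + d" using ld1 ab unfolding j_def by simp
      then have "ws!(a+d) \<in> K (is!(a+l))" using c[of "a+l"] ld ab unfolding j_def by (simp add: ld1[symmetric])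
      then show ?thesis using ld1 i1 lis unfolding ws'_def by simp
    qed
  qed
  moreover have "length is' = d" unfolding is'_def by simp
  moreover have "set is' \<subseteq> set is" unfolding is'_def using ab by auto
  ultimately show ?thesis using d2 ab by (intro exI[of _ is'] exI[of _ ws']) simp
qed



lemma wit_delete:
  assumes w: "wit K is ws" and a: "a + 1 < length is" and eq: "is!a = is!(a+1)"
  shows "\<exists>is' ws'. wit K is' ws' \<and> length is' < length is \<and> set is' = set is"
proof -
  define j where "j = length is"
  have lw: "length ws = j" and dw: "distinct ws"
    and c: "\<And>l. l < j \<Longrightarrow> ws!l \<in> K (is!l) \<and> ws!((l+1) mod j) \<in> K (is!l)"
    using w unfolding wit_def j_def by auto
  define f where "f = (\<lambda>l::nat. if l \<le> a then l else Suc l)"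
  define is' where "is' = map (\<lambda>l. is!(f l)) [0..<j-1]"
  define ws' where "ws' = map (\<lambda>l. ws!(f l)) [0..<j-1]"
  have fj: "\<And>l. l < j - 1 \<Longrightarrow> f l < j" unfolding f_def using a j_def by auto
  have finj: "inj f" unfolding f_def by (rule injI) (auto split: if_splits)
  have "wit K is' ws'"
    unfolding wit_def
  proof (intro conjI allI impI)
    show "length is' = length ws'" unfolding is'_def ws'_def by simp
    show "distinct ws'" unfolding ws'_def distinct_map
    proof
      show "inj_on (\<lambda>l. ws ! f l) (set [0..<j - 1])"
      proof (rule inj_onI)
        fix x y assume x: "x \<in> set [0..<j - 1]" and y: "y \<in> set [0..<j - 1]" and e: "ws ! f x = ws ! f y"
        have "f x = f y" using e fj x y dw lw by (simp add: nth_eq_iff_index_eq)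
        then show "x = y" using finj by (simp add: inj_eq)
      qed
    qed simp
    fix l assume l: "l < length is'"
    then have lj: "l < j - 1" unfolding is'_def by simp
    have li: "length is' = j - 1" unfolding is'_def by simp
    show "ws' ! l \<in> K (is' ! l)" using c[OF fj[OF lj]] lj unfolding is'_def ws'_def by simp
    define g where "g = (if l = a then a + 1 else f l)"
    have ig: "is!g = is!(f l)" unfolding g_def f_def using eq by simp
    have gj: "g < j" unfolding g_def using fj[OF lj] a j_def by simp
    have key: "ws' ! ((l + 1) mod (j - 1)) = ws!((g+1) mod j)"
    proof (cases "l + 1 < j - 1")
      case True
      then have m1: "(l + 1) mod (j - 1) = l + 1" by simp
      have "g + 1 < j" unfolding g_def f_def using True a j_def by auto
      then have m2: "(g + 1) mod j = g + 1" by simp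
      have "f (l + 1) = g + 1" unfolding g_def f_def by auto
      then show ?thesis using m1 m2 True unfolding ws'_def by simp
    next
      case False
      then have ll: "l + 1 = j - 1" using lj by simp
      then have m1: "(l + 1) mod (j - 1) = 0" by simp
      have "g + 1 = j" unfolding g_def f_def using ll a j_def by auto
      then have m2: "(g + 1) mod j = 0" by simp
      have "f 0 = 0" unfolding f_def by simp
      have "0 < j - 1" using lj by simp
      then show ?thesis using m1 m2 \<open>f 0 = 0\<close> unfolding ws'_def by simp
    qed
    show "ws' ! ((l + 1) mod length is') \<in> K (is' ! l)"
      using c[OF gj] key ig li lj unfolding is'_def by simp
  qed
  moreover have "length is' < length is" unfolding is'_def j_def using a by simp
  moreover have "set is' = set is"
  proof
    show "set is' \<subseteq> set is" unfolding is'_def using fj j_def by auto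
    show "set is \<subseteq> set is'"
    proof
      fix x assume "x \<in> set is"
      then obtain p where p: "p < j" "is!p = x" unfolding j_def by (auto simp: in_set_conv_nth)
      have "\<exists>l<j-1. is!(f l) = x"
      proof (cases "p \<le> a")
        case True then show ?thesis using p a unfolding f_def j_def by (intro exI[of _ p]) auto
      next
        case False
        show ?thesis
        proof (cases "p = a + 1")
          case True then show ?thesis using p a eq unfolding f_def j_def by (intro exI[of _ a]) auto
        next
          case False
          then show ?thesis using p \<open>\<not> p \<le> a\<close> unfolding f_def j_def by (intro exI[of _ "p - 1"]) auto
        qed
      qed
      then show "x \<in> set is'" unfolding is'_def by auto
    qed
  qed
  ultimately show ?thesis by blast
qed

lemma wit_reduce:
  "wit K is ws \<Longrightarrow> 2 \<le> card (set is) \<Longrightarrow>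
   \<exists>is' ws'. wit K is' ws' \<and> distinct is' \<and> 2 \<le> length is' \<and> length is' \<le> length is \<and> set is' \<subseteq> set is"
proof (induction "length is" arbitrary: "is" ws rule: less_induct)
  case less
  show ?case
  proof (cases "distinct is")
    case True
    then show ?thesis using less.prems by (metis distinct_card order_refl)
  next
    case False
    define D where "D = {d. 0 < d \<and> (\<exists>a. a + d < length is \<and> is!a = is!(a+d))}"
    have "D \<noteq> {}"
    proof -
      obtain p q where pq: "p < length is" "q < length is" "p \<noteq> q" "is!p = is!q"
        using False by (auto simp: distinct_conv_nth)
      show ?thesis
      proof (cases "p < q")
        case True then have "q - p \<in> D" unfolding D_def using pq by (auto intro!: exI[of _ p])
        then show ?thesis by blast
      next
        case False then have "p - q \<in> D" unfolding D_def using pq by (auto intro!: exI[of _ q])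
        then show ?thesis by blast
      qed
    qed
    define d where "d = Least (\<lambda>d. d \<in> D)"
    have dD: "d \<in> D" unfolding d_def using \<open>D \<noteq> {}\<close> by (metis LeastI ex_in_conv)
    have mind: "\<forall>a' d'. 0 < d' \<longrightarrow> d' < d \<longrightarrow> a' + d' < length is \<longrightarrow> is!a' \<noteq> is!(a'+d')"
    proof (intro allI impI)
      fix a' d' assume "0 < d'" "d' < d" "a' + d' < length is"
      show "is!a' \<noteq> is!(a'+d')"
      proof
        assume "is!a' = is!(a'+d')"
        then have "d' \<in> D" unfolding D_def using \<open>0 < d'\<close> \<open>a' + d' < length is\<close> by blast
        then have "d \<le> d'" unfolding d_def by (simp add: Least_le)
        then show False using \<open>d' < d\<close> by simp
      qed
    qed
    obtain a where a: "a + d < length is" "is!a = is!(a+d)" "0 < d" using dD unfolding D_def by blast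
    show ?thesis
    proof (cases "d = 1")
      case True
      obtain is' ws' where w': "wit K is' ws'" "length is' < length is" "set is' = set is"
        using wit_delete[OF less.prems(1), of a] a True by auto
      from less.hyps[OF w'(2) w'(1)] w' less.prems(2) show ?thesis by fastforce
    next
      case False
      then show ?thesis using wit_segment[OF less.prems(1) a(1) _ a(2) mind] a(3) by simp
    qed
  qed
qed



definition edges_of :: "nat set \<Rightarrow> nat set set" where
  "edges_of S = {e. e \<subseteq> S \<and> card e = 2}"

definition mono_set :: "nat set \<Rightarrow> nat set \<Rightarrow> bool" where
  "mono_set A S \<longleftrightarrow> S \<subseteq> A \<or> S \<inter> A = {}"

lemma cliques_cfree:
  assumes fin: "finite G" and cK: "\<forall>i\<in>G. card (K i) = r" and fK: "\<forall>i\<in>G. finite (K i)" and rL: "r < L"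
    and nowit: "\<forall>is ws. wit K is ws \<and> distinct is \<and> 2 \<le> length is \<and> length is \<le> L \<and> set is \<subseteq> G \<longrightarrow> False"
  shows "cycle_free_len (\<Union>i\<in>G. edges_of (K i)) L"
  unfolding cycle_free_len_def
proof
  assume "\<exists>vs. is_cycle (\<Union>i\<in>G. edges_of (K i)) vs \<and> length vs = L"
  then obtain vs where cy: "is_cycle (\<Union>i\<in>G. edges_of (K i)) vs" and lv: "length vs = L" by blast
  have ex: "\<forall>l<L. \<exists>i\<in>G. vs!l \<in> K i \<and> vs!((l+1) mod L) \<in> K i"
    using cy lv unfolding is_cycle_def edges_of_def by fastforce
  define \<sigma> where "\<sigma> = (\<lambda>l. SOME i. i \<in> G \<and> vs!l \<in> K i \<and> vs!((l+1) mod L) \<in> K i)"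
  have \<sigma>: "\<And>l. l < L \<Longrightarrow> \<sigma> l \<in> G \<and> vs!l \<in> K (\<sigma> l) \<and> vs!((l+1) mod L) \<in> K (\<sigma> l)"
    unfolding \<sigma>_def using ex by (metis (mono_tags, lifting) someI_ex)
  define "is" where "is = map \<sigma> [0..<L]"
  have w: "wit K is vs" unfolding wit_def is_def using \<sigma> cy lv unfolding is_cycle_def by simp
  have sG: "set is \<subseteq> G" unfolding is_def using \<sigma> by auto
  have L3: "L \<ge> 3" using cy lv unfolding is_cycle_def by simp
  have c2: "2 \<le> card (set is)"
  proof (rule ccontr)
    assume "\<not> 2 \<le> card (set is)"
    moreover have "set is \<noteq> {}" unfolding is_def using L3 by simp
    ultimately have "card (set is) = 1" by (simp add: Suc_leI card_gt_0_iff le_antisym)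
    then obtain i0 where i0: "set is = {i0}" by (meson card_1_singletonE)
    have "\<forall>l<L. \<sigma> l = i0" using i0 unfolding is_def by auto
    then have "set vs \<subseteq> K i0" using \<sigma> lv by (auto simp: in_set_conv_nth)
    moreover have i0G: "i0 \<in> G" using i0 sG by auto
    moreover have "finite (K i0)" using fK i0G by blast
    ultimately have "card (set vs) \<le> r" using cK by (metis card_mono)
    moreover have "card (set vs) = L" using cy lv unfolding is_cycle_def by (simp add: distinct_card)
    ultimately show False using rL by simp
  qed
  obtain is' ws' where "wit K is' ws'" "distinct is'" "2 \<le> length is'" "length is' \<le> length is" "set is' \<subseteq> set is"
    using wit_reduce[OF w c2] by blast
  moreover have "length is = L" unfolding is_def by simp
  ultimately show False using nowit sG by blast
qed

lemma edges_disjoint: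
  assumes nowit: "\<forall>is ws. wit K is ws \<and> distinct is \<and> 2 \<le> length is \<and> length is \<le> L \<and> set is \<subseteq> G \<longrightarrow> False"
    and L2: "2 \<le> L" and i: "i \<in> G" "i' \<in> G" "i \<noteq> i'"
  shows "edges_of (K i) \<inter> edges_of (K i') = {}"
proof (rule ccontr)
  assume "edges_of (K i) \<inter> edges_of (K i') \<noteq> {}"
  then obtain e where e: "e \<subseteq> K i" "e \<subseteq> K i'" "card e = 2" unfolding edges_of_def by blast
  then obtain u v where uv: "e = {u, v}" "u \<noteq> v" by (meson card_2_iff)
  have "wit K [i, i'] [u, v]" unfolding wit_def using e uv by (auto simp: less_Suc_eq)
  moreover have "distinct [i, i']" "2 \<le> length [i, i']" "length [i, i'] \<le> L" "set [i, i'] \<subseteq> G"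
    using i L2 by auto
  ultimately show False using nowit by blast
qed

lemma card_cliques:
  assumes fin: "finite G" and cK: "\<forall>i\<in>G. card (K i) = r" and fK: "\<forall>i\<in>G. finite (K i)" and r: "r \<ge> 1"
    and nowit: "\<forall>is ws. wit K is ws \<and> distinct is \<and> 2 \<le> length is \<and> length is \<le> L \<and> set is \<subseteq> G \<longrightarrow> False"
    and L2: "2 \<le> L"
  shows "card (\<Union>i\<in>G. edges_of (K i)) = card G * (r choose 2)"
proof -
  have finK: "\<And>i. i \<in> G \<Longrightarrow> finite (K i)" using fK by blast
  have "card (\<Union>i\<in>G. edges_of (K i)) = (\<Sum>i\<in>G. card (edges_of (K i)))"
  proof (rule card_UN_disjoint[OF fin])
    show "\<forall>i\<in>G. finite (edges_of (K i))"
      using finK unfolding edges_of_def by (auto intro: finite_subset[of _ "Pow _"])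
    show "\<forall>i\<in>G. \<forall>j\<in>G. i \<noteq> j \<longrightarrow> edges_of (K i) \<inter> edges_of (K j) = {}"
      using edges_disjoint[OF nowit L2] by blast
  qed
  also have "\<dots> = (\<Sum>i\<in>G. r choose 2)"
    using finK cK unfolding edges_of_def by (intro sum.cong) (auto simp: n_subsets)
  finally show ?thesis by simp
qed

lemma H_bound:
  assumes fin: "finite G" and cK: "\<forall>i\<in>G. card (K i) = r" and fK: "\<forall>i\<in>G. finite (K i)" and rL: "r < L"
    and HE: "H \<subseteq> (\<Union>i\<in>G. edges_of (K i))" and bip: "\<forall>e\<in>H. card (e \<inter> A) = 1"
    and gg: "girth_gt H L"
  shows "card H \<le> (r - 1) * card {i\<in>G. \<not> mono_set A (K i)}"
proof -
  have finK: "\<And>i. i \<in> G \<Longrightarrow> finite (K i)" using fK by blast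
  have each: "card (H \<inter> edges_of (K i)) \<le> (if mono_set A (K i) then 0 else r - 1)" if iG: "i \<in> G" for i
  proof (cases "mono_set A (K i)")
    case True
    have "H \<inter> edges_of (K i) = {}"
    proof (rule ccontr)
      assume "H \<inter> edges_of (K i) \<noteq> {}"
      then obtain e where e: "e \<in> H" "e \<subseteq> K i" "card e = 2" unfolding edges_of_def by blast
      then have "e \<inter> A = e \<or> e \<inter> A = {}" using True unfolding mono_set_def by blast
      then show False using bip e by fastforce
    qed
    then show ?thesis using True by simp
  next
    case False
    have ac: "\<forall>vs. \<not> is_cycle (H \<inter> edges_of (K i)) vs"
    proof (intro allI notI)
      fix vs assume cy: "is_cycle (H \<inter> edges_of (K i)) vs"
      then have "length vs > L" using gg is_cycle_mono unfolding girth_gt_def by blast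
      moreover have "set vs \<subseteq> K i"
      proof
        fix x assume "x \<in> set vs"
        then obtain l where l: "l < length vs" "vs!l = x" by (auto simp: in_set_conv_nth)
        then have "{vs!l, vs!((l+1) mod length vs)} \<in> edges_of (K i)" using cy unfolding is_cycle_def by blast
        then show "x \<in> K i" using l unfolding edges_of_def by auto
      qed
      then have "card (set vs) \<le> r" using cK iG finK[OF iG] by (metis card_mono)
      moreover have "card (set vs) = length vs" using cy unfolding is_cycle_def by (simp add: distinct_card)
      ultimately show False using rL by simp
    qed
    have "card (H \<inter> edges_of (K i)) \<le> card (K i) - 1"
      using forest_bound[OF finK[OF iG] _ ac] unfolding edges_of_def by blast
    then show ?thesis using False cK iG by simp
  qed
  have "H = (\<Union>i\<in>G. H \<inter> edges_of (K i))" using HE by blast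
  then have "card H \<le> (\<Sum>i\<in>G. card (H \<inter> edges_of (K i)))" by (metis card_UN_le fin)
  also have "\<dots> \<le> (\<Sum>i\<in>G. (if mono_set A (K i) then 0 else r - 1))" using each by (intro sum_mono) simp
  also have "\<dots> = (r - 1) * card {i\<in>G. \<not> mono_set A (K i)}"
  proof -
    have "G \<inter> - {i. mono_set A (K i)} = {i \<in> G. \<not> mono_set A (K i)}" by blast
    then show ?thesis using fin by (simp add: sum.If_cases mult.commute)
  qed
  finally show ?thesis .
qed



definition UU :: "nat \<Rightarrow> nat \<Rightarrow> (nat \<Rightarrow> nat) set" where
  "UU N r = PiE {..<r} (\<lambda>_. {..<N})"

definition OM :: "nat \<Rightarrow> nat \<Rightarrow> nat \<Rightarrow> (nat \<Rightarrow> nat \<Rightarrow> nat) set" where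
  "OM N r m = PiE {..<m} (\<lambda>_. UU N r)"

lemma card_UU: "card (UU N r) = N ^ r" unfolding UU_def by (simp add: card_PiE)
lemma finite_UU: "finite (UU N r)" unfolding UU_def by (simp add: finite_PiE)
lemma card_OM: "card (OM N r m) = N ^ (r * m)" unfolding OM_def by (simp add: card_PiE card_UU power_mult)
lemma finite_OM: "finite (OM N r m)" unfolding OM_def by (simp add: finite_PiE finite_UU)

lemma card_pair_fixed:
  assumes "p < r" "q < r" "p \<noteq> q"
  shows "card {t\<in>UU N r. t p = a \<and> t q = b} \<le> N ^ (r - 2)"
proof -
  define T where "T = (\<lambda>x. if x = p then {a} else if x = q then {b} else {..<N})"
  have sub: "{t\<in>UU N r. t p = a \<and> t q = b} \<subseteq> PiE {..<r} T"
  proof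
    fix t assume t: "t \<in> {t\<in>UU N r. t p = a \<and> t q = b}"
    then have tU: "t \<in> PiE {..<r} (\<lambda>_. {..<N})" and tp: "t p = a" and tq: "t q = b" unfolding UU_def by auto
    show "t \<in> PiE {..<r} T"
      unfolding PiE_iff
    proof (intro conjI ballI)
      show "t \<in> extensional {..<r}" using tU by (simp add: PiE_iff)
      fix x assume x: "x \<in> {..<r}"
      have "t x \<in> {..<N}" using tU x by (simp add: PiE_iff)
      then show "t x \<in> T x" unfolding T_def using tp tq by simp
    qed
  qed
  have finT: "finite (PiE {..<r} T)" unfolding T_def by (intro finite_PiE) auto
  have "card {t\<in>UU N r. t p = a \<and> t q = b} \<le> card (PiE {..<r} T)" by (rule card_mono[OF finT sub])
  also have "\<dots> = (\<Prod>x<r. card (T x))" by (simp add: card_PiE)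
  also have "\<dots> = (\<Prod>x<r. if x \<in> {p, q} then 1 else N)" unfolding T_def by (intro prod.cong) auto
  also have "\<dots> = (\<Prod>x\<in>{..<r} \<inter> {x. x \<in> {p, q}}. 1) * (\<Prod>x\<in>{..<r} \<inter> - {x. x \<in> {p, q}}. N)"
    by (rule prod.If_cases) simp
  also have "\<dots> = N ^ card ({..<r} - {p, q})"
  proof -
    have "{..<r} \<inter> - {x. x \<in> {p, q}} = {..<r} - {p, q}" by blast
    then show ?thesis by simp
  qed
  also have "card ({..<r} - {p, q}) = r - 2" using assms by (simp add: card_Diff_subset)
  finally show ?thesis by simp
qed

lemma card_pairset:
  assumes "a \<noteq> b"
  shows "card {t\<in>UU N r. a \<in> t ` {..<r} \<and> b \<in> t ` {..<r}} \<le> r * r * N ^ (r - 2)"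
proof -
  have "{t\<in>UU N r. a \<in> t ` {..<r} \<and> b \<in> t ` {..<r}} \<subseteq>
        (\<Union>p<r. \<Union>q\<in>{..<r} - {p}. {t\<in>UU N r. t p = a \<and> t q = b})"
    using assms by auto
  then have "card {t\<in>UU N r. a \<in> t ` {..<r} \<and> b \<in> t ` {..<r}} \<le>
      card (\<Union>p<r. \<Union>q\<in>{..<r} - {p}. {t\<in>UU N r. t p = a \<and> t q = b})"
    by (intro card_mono) (auto intro: finite_subset[OF _ finite_UU])
  also have "\<dots> \<le> (\<Sum>p<r. card (\<Union>q\<in>{..<r} - {p}. {t\<in>UU N r. t p = a \<and> t q = b}))"
    by (rule card_UN_le) simp
  also have "\<dots> \<le> (\<Sum>p<r. \<Sum>q\<in>{..<r} - {p}. card {t\<in>UU N r. t p = a \<and> t q = b})"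
    by (intro sum_mono card_UN_le) simp
  also have "\<dots> \<le> (\<Sum>p<r. \<Sum>q\<in>{..<r} - {p}. N ^ (r - 2))"
    by (intro sum_mono card_pair_fixed) auto
  also have "\<dots> \<le> (\<Sum>p<r. \<Sum>q<r. N ^ (r - 2))"
    by (intro sum_mono sum_mono2) auto
  also have "\<dots> = r * r * N ^ (r - 2)" by simp
  finally show ?thesis .
qed

lemma card_noninj:
  assumes "r \<ge> 2"
  shows "card {t\<in>UU N r. \<not> inj_on t {..<r}} \<le> r * r * N ^ (r - 1)"
proof -
  have "{t\<in>UU N r. \<not> inj_on t {..<r}} \<subseteq>
        (\<Union>p<r. \<Union>q\<in>{..<r} - {p}. \<Union>a<N. {t\<in>UU N r. t p = a \<and> t q = a})"
    unfolding inj_on_def UU_def by (auto simp: PiE_iff)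
  then have "card {t\<in>UU N r. \<not> inj_on t {..<r}} \<le>
      card (\<Union>p<r. \<Union>q\<in>{..<r} - {p}. \<Union>a<N. {t\<in>UU N r. t p = a \<and> t q = a})"
    by (intro card_mono) (auto intro: finite_subset[OF _ finite_UU])
  also have "\<dots> \<le> (\<Sum>p<r. card (\<Union>q\<in>{..<r} - {p}. \<Union>a<N. {t\<in>UU N r. t p = a \<and> t q = a}))"
    by (rule card_UN_le) simp
  also have "\<dots> \<le> (\<Sum>p<r. \<Sum>q\<in>{..<r} - {p}. card (\<Union>a<N. {t\<in>UU N r. t p = a \<and> t q = a}))"
    by (intro sum_mono card_UN_le) simp
  also have "\<dots> \<le> (\<Sum>p<r. \<Sum>q\<in>{..<r} - {p}. \<Sum>a<N. card {t\<in>UU N r. t p = a \<and> t q = a})"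
    by (intro sum_mono card_UN_le) simp
  also have "\<dots> \<le> (\<Sum>p<r. \<Sum>q\<in>{..<r} - {p}. \<Sum>a<N. N ^ (r - 2))"
    by (intro sum_mono card_pair_fixed) auto
  also have "\<dots> \<le> (\<Sum>p<r. \<Sum>q<r. N * N ^ (r - 2))"
    by (intro sum_mono sum_mono2) auto
  also have "\<dots> = r * r * N ^ (r - 1)"
  proof -
    have "r - 1 = Suc (r - 2)" using assms by simp
    then have "N * N ^ (r - 2) = N ^ (r - 1)" by simp
    then show ?thesis by simp
  qed
  finally show ?thesis .
qed

lemma power_mean2:
  fixes a b :: real
  assumes "a \<ge> 0" "b \<ge> 0" "r \<ge> 1"
  shows "2 / 2 ^ r * (a + b) ^ r \<le> a ^ r + b ^ r"
  using assms(3)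
proof (induction r rule: dec_induct)
  case base then show ?case by simp
next
  case (step n)
  have ch: "(a + b) * (a ^ n + b ^ n) \<le> 2 * (a ^ Suc n + b ^ Suc n)"
  proof -
    have "0 \<le> (a - b) * (a ^ n - b ^ n)"
    proof (cases "a \<le> b")
      case True then have "a ^ n \<le> b ^ n" using assms by (simp add: power_mono)
      then show ?thesis using True by (simp add: mult_nonpos_nonpos)
    next
      case False then have "b ^ n \<le> a ^ n" using assms by (simp add: power_mono)
      then show ?thesis using False by simp
    qed
    then show ?thesis by (simp add: algebra_simps)
  qed
  have "2 / 2 ^ Suc n * (a + b) ^ Suc n = (a + b) * (2 / 2 ^ n * (a + b) ^ n) / 2" by (simp add: field_simps)
  also have "\<dots> \<le> (a + b) * (a ^ n + b ^ n) / 2"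
    using step.IH assms by (intro divide_right_mono mult_left_mono) auto
  also have "\<dots> \<le> a ^ Suc n + b ^ Suc n" using ch by simp
  finally show ?case .
qed

lemma card_mono_tuples:
  assumes A: "A \<subseteq> {..<N}" and r: "r \<ge> 1"
  shows "2 / 2 ^ r * real N ^ r \<le> real (card {t\<in>UU N r. mono_set A (t ` {..<r})})"
proof -
  have s1: "PiE {..<r} (\<lambda>_. A) \<subseteq> {t\<in>UU N r. mono_set A (t ` {..<r})}"
  proof
    fix t assume t: "t \<in> PiE {..<r} (\<lambda>_. A)"
    have "t \<in> UU N r" unfolding UU_def using PiE_mono[of "{..<r}" "\<lambda>_. A" "\<lambda>_. {..<N}"] A t by blast
    moreover have "t ` {..<r} \<subseteq> A" using t PiE_mem by blast
    ultimately show "t \<in> {t\<in>UU N r. mono_set A (t ` {..<r})}" unfolding mono_set_def by blast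
  qed
  have s2: "PiE {..<r} (\<lambda>_. {..<N} - A) \<subseteq> {t\<in>UU N r. mono_set A (t ` {..<r})}"
  proof
    fix t assume t: "t \<in> PiE {..<r} (\<lambda>_. {..<N} - A)"
    have "t \<in> UU N r" unfolding UU_def using PiE_mono[of "{..<r}" "\<lambda>_. {..<N} - A" "\<lambda>_. {..<N}"] t by blast
    moreover have "t ` {..<r} \<subseteq> {..<N} - A" using t PiE_mem by blast
    ultimately show "t \<in> {t\<in>UU N r. mono_set A (t ` {..<r})}" unfolding mono_set_def by blast
  qed
  have disj: "PiE {..<r} (\<lambda>_. A) \<inter> PiE {..<r} (\<lambda>_. {..<N} - A) = {}"
  proof (intro equals0I)
    fix t assume t: "t \<in> PiE {..<r} (\<lambda>_. A) \<inter> PiE {..<r} (\<lambda>_. {..<N} - A)"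
    have "0 \<in> {..<r}" using r by simp
    then have "t 0 \<in> A" "t 0 \<in> {..<N} - A" using t PiE_mem by blast+
    then show False by simp
  qed
  have finA: "finite A" using A finite_subset by blast
  have finS: "finite {t\<in>UU N r. mono_set A (t ` {..<r})}" using finite_UU by simp
  have c1: "card (PiE {..<r} (\<lambda>_. A) \<union> PiE {..<r} (\<lambda>_. {..<N} - A)) = card A ^ r + card ({..<N} - A) ^ r"
    using disj finA by (simp add: card_Un_disjoint card_PiE finite_PiE)
  have "card (PiE {..<r} (\<lambda>_. A) \<union> PiE {..<r} (\<lambda>_. {..<N} - A)) \<le> card {t\<in>UU N r. mono_set A (t ` {..<r})}"
    using s1 s2 finS by (intro card_mono) auto
  then have le: "card A ^ r + card ({..<N} - A) ^ r \<le> card {t\<in>UU N r. mono_set A (t ` {..<r})}" using c1 by simp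
  have cA: "card A \<le> N" using card_mono[OF finite_lessThan A] by simp
  have cD: "card ({..<N} - A) = N - card A" using A finA by (simp add: card_Diff_subset)
  have rd: "real (N - card A) = real N - real (card A)" using cA by (simp add: of_nat_diff)
  have "2 / 2 ^ r * (real (card A) + (real N - real (card A))) ^ r \<le> real (card A) ^ r + (real N - real (card A)) ^ r"
    using power_mean2[of "real (card A)" "real N - real (card A)" r] cA r by simp
  also have "\<dots> = real (card A ^ r + card ({..<N} - A) ^ r)" using cD rd by simp
  also have "\<dots> \<le> real (card {t\<in>UU N r. mono_set A (t ` {..<r})})" using le by (simp only: of_nat_le_iff)
  finally show ?thesis by simp
qed



lemma sum_card_swap:
  assumes "finite A" "finite B"
  shows "(\<Sum>x\<in>A. card {y\<in>B. P x y}) = (\<Sum>y\<in>B. card {x\<in>A. P x y})"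
proof -
  have "(\<Sum>x\<in>A. card {y\<in>B. P x y}) = (\<Sum>x\<in>A. \<Sum>y\<in>B. if P x y then 1 else 0)"
    using assms by (simp add: sum.If_cases Int_def conj_commute)
  also have "\<dots> = (\<Sum>y\<in>B. \<Sum>x\<in>A. if P x y then 1 else 0)" by (rule sum.swap)
  also have "\<dots> = (\<Sum>y\<in>B. card {x\<in>A. P x y})"
    using assms by (simp add: sum.If_cases Int_def conj_commute)
  finally show ?thesis .
qed

lemma chernoff_count:
  fixes lam p c :: real
  assumes S: "S \<subseteq> UU N r" and pS: "p * real N ^ r \<le> real (card S)" and l0: "0 < lam" and l1: "lam < 1"
  shows "real (card {X\<in>OM N r m. real (card {i\<in>{..<m}. X i \<in> S}) < c}) * lam powr c
          \<le> (real N ^ r * (1 - (1 - lam) * p)) ^ m"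
proof -
  define g where "g = (\<lambda>u. if u \<in> S then lam else 1)"
  define cnt where "cnt = (\<lambda>X. card {i\<in>{..<m}. X i \<in> S})"
  define B where "B = {X\<in>OM N r m. real (cnt X) < c}"
  have finS: "finite S" using S finite_UU finite_subset by blast
  have prodg: "(\<Prod>i<m. g (X i)) = lam ^ cnt X" for X
  proof -
    have "(\<Prod>i<m. g (X i)) = (\<Prod>i\<in>{..<m} \<inter> {i. X i \<in> S}. lam) * (\<Prod>i\<in>{..<m} \<inter> - {i. X i \<in> S}. 1)"
      unfolding g_def by (simp add: prod.If_cases)
    also have "\<dots> = lam ^ cnt X" unfolding cnt_def by (simp add: Int_def conj_commute)
    finally show ?thesis .
  qed
  have sumall: "(\<Sum>X\<in>OM N r m. lam ^ cnt X) = (\<Sum>u\<in>UU N r. g u) ^ m"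
  proof -
    have "(\<Sum>X\<in>OM N r m. lam ^ cnt X) = (\<Sum>X\<in>OM N r m. \<Prod>i<m. g (X i))" using prodg by simp
    also have "\<dots> = (\<Prod>i<m. \<Sum>u\<in>UU N r. g u)"
      unfolding OM_def by (rule prod_sum_PiE[symmetric]) (auto simp: finite_UU)
    finally show ?thesis by simp
  qed
  have sumg: "(\<Sum>u\<in>UU N r. g u) = real N ^ r - (1 - lam) * real (card S)"
  proof -
    have "(\<Sum>u\<in>UU N r. g u) = (\<Sum>u\<in>UU N r \<inter> S. lam) + (\<Sum>u\<in>UU N r \<inter> - S. 1)"
      unfolding g_def using sum.If_cases[OF finite_UU, of "\<lambda>u. u \<in> S" "\<lambda>_. lam" "\<lambda>_. 1" N r] by simp
    also have "UU N r \<inter> S = S" using S by blast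
    also have "UU N r \<inter> - S = UU N r - S" by blast
    also have "(\<Sum>u\<in>S. lam) + (\<Sum>u\<in>UU N r - S. 1) = real (card S) * lam + real (card (UU N r - S))" by simp
    also have "real (card (UU N r - S)) = real N ^ r - real (card S)"
    proof -
      have "card S \<le> N ^ r" using S finite_UU card_mono card_UU by metis
      then show ?thesis using S finS by (simp add: card_Diff_subset card_UU of_nat_diff)
    qed
    finally show ?thesis by (simp add: algebra_simps)
  qed
  have "real (card B) * lam powr c = (\<Sum>X\<in>B. lam powr c)" by simp
  also have "\<dots> \<le> (\<Sum>X\<in>B. lam ^ cnt X)"
  proof (intro sum_mono)
    fix X assume "X \<in> B"
    then have "real (cnt X) \<le> c" unfolding B_def by simp
    then have "lam powr c \<le> lam powr (real (cnt X))" using l0 l1 by (intro powr_mono') auto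
    then show "lam powr c \<le> lam ^ cnt X" using l0 by (simp add: powr_realpow)
  qed
  also have "\<dots> \<le> (\<Sum>X\<in>OM N r m. lam ^ cnt X)"
    using l0 by (intro sum_mono2) (auto simp: B_def finite_OM)
  also have "\<dots> = (real N ^ r - (1 - lam) * real (card S)) ^ m" using sumall sumg by simp
  also have "\<dots> \<le> (real N ^ r * (1 - (1 - lam) * p)) ^ m"
  proof (rule power_mono)
    have "(1 - lam) * (p * real N ^ r) \<le> (1 - lam) * real (card S)" using pS l1 by (intro mult_left_mono) auto
    then show "real N ^ r - (1 - lam) * real (card S) \<le> real N ^ r * (1 - (1 - lam) * p)"
      by (simp add: algebra_simps)
    have "card S \<le> N ^ r" using S finite_UU card_mono card_UU by metis
    then have "real (card S) \<le> real (N ^ r)" by (simp only: of_nat_le_iff)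
    then have "real (card S) \<le> real N ^ r" by simp
    then have "(1 - lam) * real (card S) \<le> 1 * real N ^ r" using l0 l1 by (intro mult_mono) auto
    then show "0 \<le> real N ^ r - (1 - lam) * real (card S)" by simp
  qed
  finally show ?thesis unfolding B_def cnt_def .
qed



definition KX :: "nat \<Rightarrow> (nat \<Rightarrow> nat \<Rightarrow> nat) \<Rightarrow> nat \<Rightarrow> nat set" where
  "KX r X = (\<lambda>i. X i ` {..<r})"

definition Cand :: "nat \<Rightarrow> nat \<Rightarrow> nat \<Rightarrow> (nat list \<times> nat list) set" where
  "Cand m N j = {(is, ws). length is = j \<and> length ws = j \<and> distinct is \<and> distinct ws \<and> set is \<subseteq> {..<m} \<and> set ws \<subseteq> {..<N}}"

definition Wits :: "nat \<Rightarrow> nat \<Rightarrow> nat \<Rightarrow> nat \<Rightarrow> (nat \<Rightarrow> nat \<Rightarrow> nat) \<Rightarrow> (nat list \<times> nat list) set" where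
  "Wits r m N j X = {w \<in> Cand m N j. wit (KX r X) (fst w) (snd w)}"

definition Deg :: "nat \<Rightarrow> nat \<Rightarrow> (nat \<Rightarrow> nat \<Rightarrow> nat) \<Rightarrow> nat set" where
  "Deg r m X = {i\<in>{..<m}. \<not> inj_on (X i) {..<r}}"

lemma Cand_sub: "Cand m N j \<subseteq> {xs. set xs \<subseteq> {..<m} \<and> length xs = j} \<times> {xs. set xs \<subseteq> {..<N} \<and> length xs = j}"
  unfolding Cand_def by auto

lemma finite_Cand: "finite (Cand m N j)"
  by (rule finite_subset[OF Cand_sub]) (simp add: finite_lists_length_eq)

lemma card_Cand: "card (Cand m N j) \<le> m ^ j * N ^ j"
proof -
  have "card (Cand m N j) \<le> card ({xs. set xs \<subseteq> {..<m} \<and> length xs = j} \<times> {xs. set xs \<subseteq> {..<N} \<and> length xs = j})"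
    by (rule card_mono[OF _ Cand_sub]) (simp add: finite_lists_length_eq)
  also have "\<dots> = m ^ j * N ^ j" by (simp add: card_cartesian_product card_lists_length_eq)
  finally show ?thesis .
qed

lemma card_wit_fixed:
  assumes w: "(is, ws) \<in> Cand m N j" and j2: "2 \<le> j"
  shows "card {X\<in>OM N r m. wit (KX r X) is ws} \<le> (r * r * N ^ (r - 2)) ^ j * (N ^ r) ^ (m - j)"
proof -
  define Q where "Q = (\<lambda>i. {t\<in>UU N r. \<forall>l<j. is!l = i \<longrightarrow> ws!l \<in> t ` {..<r} \<and> ws!((l+1) mod j) \<in> t ` {..<r}})"
  have lis: "length is = j" and lws: "length ws = j" and dis: "distinct is" and dws: "distinct ws"
    and sis: "set is \<subseteq> {..<m}" using w unfolding Cand_def by auto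
  have sub: "{X\<in>OM N r m. wit (KX r X) is ws} \<subseteq> PiE {..<m} Q"
  proof
    fix X assume X: "X \<in> {X\<in>OM N r m. wit (KX r X) is ws}"
    then have XO: "X \<in> PiE {..<m} (\<lambda>_. UU N r)" and wX: "wit (KX r X) is ws" unfolding OM_def by auto
    show "X \<in> PiE {..<m} Q"
      unfolding PiE_iff
    proof (intro conjI ballI)
      show "X \<in> extensional {..<m}" using XO by (simp add: PiE_iff)
      fix i assume i: "i \<in> {..<m}"
      show "X i \<in> Q i" unfolding Q_def using XO i wX lis unfolding wit_def KX_def by (auto simp: PiE_iff)
    qed
  qed
  have B: "card (Q i) \<le> (if i \<in> set is then r * r * N ^ (r - 2) else N ^ r)" for i
  proof (cases "i \<in> set is")
    case True
    then obtain l where l: "l < j" "is!l = i" using lis by (auto simp: in_set_conv_nth)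
    have ne: "ws!l \<noteq> ws!((l+1) mod j)"
    proof
      assume "ws!l = ws!((l+1) mod j)"
      then have "l = (l+1) mod j" using dws lws l by (simp add: nth_eq_iff_index_eq)
      moreover have "(l+1) mod j \<noteq> l"
      proof (cases "l + 1 < j")
        case True then show ?thesis by simp
      next
        case False then have "l + 1 = j" using l by simp
        then show ?thesis using j2 by simp
      qed
      ultimately show False by simp
    qed
    have "Q i \<subseteq> {t\<in>UU N r. ws!l \<in> t ` {..<r} \<and> ws!((l+1) mod j) \<in> t ` {..<r}}"
      unfolding Q_def using l by auto
    then have "card (Q i) \<le> card {t\<in>UU N r. ws!l \<in> t ` {..<r} \<and> ws!((l+1) mod j) \<in> t ` {..<r}}"
      by (intro card_mono) (auto intro: finite_subset[OF _ finite_UU])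
    also have "\<dots> \<le> r * r * N ^ (r - 2)" by (rule card_pairset[OF ne])
    finally show ?thesis using True by simp
  next
    case False
    have "card (Q i) \<le> card (UU N r)" unfolding Q_def by (intro card_mono) (auto simp: finite_UU)
    then show ?thesis using False by (simp add: card_UU)
  qed
  have "card {X\<in>OM N r m. wit (KX r X) is ws} \<le> card (PiE {..<m} Q)"
  proof (rule card_mono[OF _ sub])
    have "\<And>i. finite (Q i)" unfolding Q_def by (rule finite_subset[OF _ finite_UU]) blast
    then show "finite (PiE {..<m} Q)" by (intro finite_PiE) auto
  qed
  also have "\<dots> = (\<Prod>i<m. card (Q i))" by (simp add: card_PiE)
  also have "\<dots> \<le> (\<Prod>i<m. if i \<in> set is then r * r * N ^ (r - 2) else N ^ r)"
    by (intro prod_mono conjI) (simp_all only: B zero_le)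
  also have "\<dots> = (r * r * N ^ (r - 2)) ^ j * (N ^ r) ^ (m - j)"
  proof -
    have e1: "{..<m} \<inter> {i. i \<in> set is} = set is" using sis by auto
    have e2: "{..<m} \<inter> - {i. i \<in> set is} = {..<m} - set is" by auto
    have e3: "card (set is) = j" using dis lis by (simp add: distinct_card)
    have e4: "card ({..<m} - set is) = m - j" using sis e3 by (simp add: card_Diff_subset)
    have "(\<Prod>i<m. if i \<in> set is then r * r * N ^ (r - 2) else N ^ r) =
       (\<Prod>i\<in>{..<m} \<inter> {i. i \<in> set is}. r * r * N ^ (r - 2)) * (\<Prod>i\<in>{..<m} \<inter> - {i. i \<in> set is}. N ^ r)"
      by (rule prod.If_cases) simp
    also have "\<dots> = (r * r * N ^ (r - 2)) ^ j * (N ^ r) ^ (m - j)"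
      unfolding e1 e2 using e3 e4 by simp
    finally show ?thesis .
  qed
  finally show ?thesis .
qed

lemma sum_wits:
  assumes j2: "2 \<le> j" and m: "m = C * N" and r2: "2 \<le> r"
  shows "(\<Sum>X\<in>OM N r m. card (Wits r m N j X)) \<le> (C * r * r) ^ j * N ^ (r * m)"
proof -
  have "(\<Sum>X\<in>OM N r m. card (Wits r m N j X)) = (\<Sum>w\<in>Cand m N j. card {X\<in>OM N r m. wit (KX r X) (fst w) (snd w)})"
    unfolding Wits_def by (rule sum_card_swap) (auto simp: finite_OM finite_Cand)
  also have "\<dots> \<le> (\<Sum>w\<in>Cand m N j. (r * r * N ^ (r - 2)) ^ j * (N ^ r) ^ (m - j))"
    by (intro sum_mono) (use card_wit_fixed[OF _ j2] in force)
  also have "\<dots> = card (Cand m N j) * ((r * r * N ^ (r - 2)) ^ j * (N ^ r) ^ (m - j))" by simp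
  also have "\<dots> \<le> (C * r * r) ^ j * N ^ (r * m)"
  proof (cases "j \<le> m")
    case True
    have "card (Cand m N j) * ((r * r * N ^ (r - 2)) ^ j * (N ^ r) ^ (m - j))
        \<le> m ^ j * N ^ j * ((r * r * N ^ (r - 2)) ^ j * (N ^ r) ^ (m - j))"
      using card_Cand by (intro mult_right_mono) auto
    also have "\<dots> = (C * r * r) ^ j * (N ^ j * N ^ j * N ^ ((r - 2) * j) * N ^ (r * (m - j)))"
      unfolding m by (simp add: power_mult_distrib power_mult[symmetric] algebra_simps)
    also have "\<dots> = (C * r * r) ^ j * N ^ (r * m)"
    proof -
      have "j + j + (r - 2) * j + r * (m - j) = r * m"
      proof -
        have "j + j + (r - 2) * j = r * j" using r2 by (simp add: algebra_simps diff_mult_distrib)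
        moreover have "r * j + r * (m - j) = r * m" using True by (simp add: add_mult_distrib2[symmetric])
        ultimately show ?thesis by simp
      qed
      then have "N ^ j * N ^ j * N ^ ((r - 2) * j) * N ^ (r * (m - j)) = N ^ (r * m)" by (metis power_add)
      then show ?thesis by simp
    qed
    finally show ?thesis .
  next
    case False
    have "Cand m N j = {}"
    proof (rule ccontr)
      assume "Cand m N j \<noteq> {}"
      then obtain xs ys where "(xs, ys) \<in> Cand m N j" by auto
      then have "card (set xs) = j" "set xs \<subseteq> {..<m}" unfolding Cand_def by (auto simp: distinct_card)
      then have "j \<le> m" by (metis card_lessThan card_mono finite_lessThan)
      then show False using False by simp
    qed
    then show ?thesis by simp
  qed
  finally show ?thesis .
qed

lemma sum_deg:
  assumes m: "m = C * N" and r2: "2 \<le> r"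
  shows "(\<Sum>X\<in>OM N r m. card (Deg r m X)) \<le> C * r * r * N ^ (r * m)"
proof -
  define Bad where "Bad = {t\<in>UU N r. \<not> inj_on t {..<r}}"
  have finB: "finite Bad" unfolding Bad_def using finite_UU by simp
  have "(\<Sum>X\<in>OM N r m. card (Deg r m X)) = (\<Sum>i\<in>{..<m}. card {X\<in>OM N r m. \<not> inj_on (X i) {..<r}})"
    unfolding Deg_def by (rule sum_card_swap) (auto simp: finite_OM)
  also have "\<dots> \<le> (\<Sum>i\<in>{..<m}. r * r * N ^ (r - 1) * (N ^ r) ^ (m - 1))"
  proof (intro sum_mono)
    fix i assume i: "i \<in> {..<m}"
    define T where "T = (\<lambda>i'. if i' = i then Bad else UU N r)"
    have sub: "{X\<in>OM N r m. \<not> inj_on (X i) {..<r}} \<subseteq> PiE {..<m} T"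
    proof
      fix X assume X: "X \<in> {X\<in>OM N r m. \<not> inj_on (X i) {..<r}}"
      then have XO: "X \<in> PiE {..<m} (\<lambda>_. UU N r)" and ni: "\<not> inj_on (X i) {..<r}" unfolding OM_def by auto
      show "X \<in> PiE {..<m} T"
        unfolding PiE_iff
      proof (intro conjI ballI)
        show "X \<in> extensional {..<m}" using XO by (simp add: PiE_iff)
        fix x assume x: "x \<in> {..<m}"
        have "X x \<in> UU N r" using XO x by (simp add: PiE_iff)
        then show "X x \<in> T x" unfolding T_def Bad_def using ni by (cases "x = i") simp_all
      qed
    qed
    have finT: "finite (PiE {..<m} T)" unfolding T_def using finB by (intro finite_PiE) (auto simp: finite_UU)
    have "card {X\<in>OM N r m. \<not> inj_on (X i) {..<r}} \<le> card (PiE {..<m} T)" by (rule card_mono[OF finT sub])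
    also have "\<dots> = (\<Prod>i'<m. card (T i'))" by (simp add: card_PiE)
    also have "\<dots> = card (T i) * (\<Prod>i'\<in>{..<m} - {i}. card (T i'))"
      using i by (intro prod.remove) auto
    also have "(\<Prod>i'\<in>{..<m} - {i}. card (T i')) = (\<Prod>i'\<in>{..<m} - {i}. N ^ r)"
      unfolding T_def by (intro prod.cong) (auto simp: card_UU)
    also have "\<dots> = (N ^ r) ^ (m - 1)" using i by simp
    also have "card (T i) = card Bad" unfolding T_def by simp
    also have "card Bad * (N ^ r) ^ (m - 1) \<le> r * r * N ^ (r - 1) * (N ^ r) ^ (m - 1)"
      unfolding Bad_def using card_noninj[OF r2] by (intro mult_right_mono) auto
    finally show "card {X\<in>OM N r m. \<not> inj_on (X i) {..<r}} \<le> r * r * N ^ (r - 1) * (N ^ r) ^ (m - 1)" .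
  qed
  also have "\<dots> = m * (r * r * N ^ (r - 1) * (N ^ r) ^ (m - 1))" by simp
  also have "\<dots> \<le> C * r * r * N ^ (r * m)"
  proof (cases "m = 0")
    case True then show ?thesis by simp
  next
    case False
    have e1: "N * N ^ (r - 1) = N ^ r"
    proof -
      have "r = Suc (r - 1)" using r2 by simp
      then show ?thesis by (metis power_Suc)
    qed
    have e2: "N ^ r * (N ^ r) ^ (m - 1) = N ^ (r * m)"
    proof -
      have "m = Suc (m - 1)" using False by simp
      then have "N ^ r * (N ^ r) ^ (m - 1) = (N ^ r) ^ m" by (metis power_Suc)
      then show ?thesis by (simp add: power_mult)
    qed
    have "m * (r * r * N ^ (r - 1) * (N ^ r) ^ (m - 1)) = C * r * r * ((N * N ^ (r - 1)) * (N ^ r) ^ (m - 1))"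
      unfolding m by (simp add: algebra_simps)
    also have "\<dots> = C * r * r * N ^ (r * m)" using e1 e2 by simp
    finally show ?thesis by (rule eq_imp_le)
  qed
  finally show ?thesis .
qed



lemma q_lt_1:
  fixes d p :: real
  assumes d0: "0 < d" and d1: "d \<le> 1/2" and p: "0 < p" and p1: "p \<le> 1"
  shows "(1 - d/2) powr (-((1 - d) * p)) * (1 - (d/2) * p) < 1"
proof -
  define lam where "lam = 1 - d/2"
  define a where "a = (1 - d) * p"
  have l0: "0 < lam" using d1 unfolding lam_def by simp
  have a0: "0 \<le> a" using d1 p unfolding a_def by simp
  have "ln (inverse lam) \<le> inverse lam - 1" using l0 by (intro ln_le_minus_one) simp
  then have lnl: "- ln lam \<le> inverse lam - 1" by (simp add: ln_inverse)
  have e1: "lam powr (-a) = exp (a * (- ln lam))" using l0 unfolding powr_def by simp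
  have "a * (- ln lam) \<le> a * (inverse lam - 1)" using lnl a0 by (rule mult_left_mono)
  also have "a * (inverse lam - 1) = a * (d/2) / lam" using l0 unfolding lam_def by (simp add: field_simps)
  finally have x1: "lam powr (-a) \<le> exp (a * (d/2) / lam)" using e1 by simp
  have x2: "1 - (d/2) * p \<le> exp (- ((d/2) * p))" using exp_ge_add_one_self[of "- ((d/2) * p)"] by simp
  have x2': "0 \<le> 1 - (d/2) * p"
  proof -
    have "(d/2) * p \<le> 1 * 1" using d1 p p1 d0 by (intro mult_mono) auto
    then show ?thesis by simp
  qed
  have "lam powr (-a) * (1 - (d/2) * p) \<le> exp (a * (d/2) / lam) * exp (- ((d/2) * p))"
    using x1 x2 x2' by (intro mult_mono) auto
  also have "\<dots> = exp (a * (d/2) / lam - (d/2) * p)" by (simp add: exp_add[symmetric])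
  also have "\<dots> < 1"
  proof -
    have "a < p * lam" unfolding a_def lam_def using d0 p by (simp add: algebra_simps)
    then have "a / lam < p" using l0 by (simp add: divide_less_eq)
    then have "(d/2) * (a / lam) < (d/2) * p" using d0 by (intro mult_strict_left_mono) auto
    then have "a * (d/2) / lam - (d/2) * p < 0" by (simp add: field_simps)
    then show ?thesis by simp
  qed
  finally show ?thesis unfolding lam_def a_def .
qed

definition SA :: "nat \<Rightarrow> nat \<Rightarrow> nat set \<Rightarrow> (nat \<Rightarrow> nat) set" where
  "SA N r A = {t\<in>UU N r. mono_set A (t ` {..<r})}"

definition Wt :: "nat \<Rightarrow> nat \<Rightarrow> nat \<Rightarrow> nat \<Rightarrow> (nat \<Rightarrow> nat \<Rightarrow> nat) \<Rightarrow> nat" where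
  "Wt r m N L X = card (Deg r m X) + L * (\<Sum>j\<in>{2..L}. card (Wits r m N j X))"

definition Kc :: "nat \<Rightarrow> nat \<Rightarrow> nat \<Rightarrow> nat" where
  "Kc C r L = C * r * r + L * (\<Sum>j\<in>{2..L}. (C * r * r) ^ j)"

lemma sum_Wt:
  assumes m: "m = C * N" and r2: "2 \<le> r"
  shows "(\<Sum>X\<in>OM N r m. Wt r m N L X) \<le> Kc C r L * N ^ (r * m)"
proof -
  have "(\<Sum>X\<in>OM N r m. Wt r m N L X) = (\<Sum>X\<in>OM N r m. card (Deg r m X)) + L * (\<Sum>j\<in>{2..L}. \<Sum>X\<in>OM N r m. card (Wits r m N j X))"
    unfolding Wt_def by (simp add: sum.distrib sum_distrib_left sum.swap[of _ "{2..L}"])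
  also have "\<dots> \<le> C * r * r * N ^ (r * m) + L * (\<Sum>j\<in>{2..L}. (C * r * r) ^ j * N ^ (r * m))"
    using sum_deg[OF m r2] sum_wits[OF _ m r2] by (intro add_mono mult_left_mono sum_mono) auto
  also have "\<dots> = Kc C r L * N ^ (r * m)" unfolding Kc_def by (simp add: add_mult_distrib sum_distrib_right mult.assoc)
  finally show ?thesis .
qed

lemma bad1_bound:
  fixes lam p a :: real
  assumes r1: "1 \<le> r" and m: "m = C * N" and l0: "0 < lam" and l1: "lam < 1" and p: "p = 2 / 2 ^ r"
    and q: "(lam powr (-a) * (1 - (1-lam)*p)) ^ C \<le> 1/4"
  shows "real (card {X\<in>OM N r m. \<exists>A\<in>Pow {..<N}. real (card {i\<in>{..<m}. X i \<in> SA N r A}) < a * m})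
           \<le> real N ^ (r * m) * (1/2) ^ N"
proof -
  define qq where "qq = lam powr (-a) * (1 - (1-lam)*p)"
  define B where "B = (\<lambda>A. {X\<in>OM N r m. real (card {i\<in>{..<m}. X i \<in> SA N r A}) < a * m})"
  have p1: "p \<le> 1"
  proof -
    have "(2::real) ^ 1 \<le> 2 ^ r" using r1 by (intro power_increasing) auto
    then show ?thesis unfolding p by simp
  qed
  have p0: "0 \<le> p" unfolding p by simp
  have qq0: "0 \<le> qq"
  proof -
    have "(1 - lam) * p \<le> 1 * 1" using l0 l1 p1 p0 by (intro mult_mono) auto
    then show ?thesis unfolding qq_def by simp
  qed
  have eachA: "real (card (B A)) \<le> real N ^ (r * m) * qq ^ m" if A: "A \<subseteq> {..<N}" for A
  proof -
    have S: "SA N r A \<subseteq> UU N r" unfolding SA_def by blast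
    have pS: "p * real N ^ r \<le> real (card (SA N r A))" unfolding SA_def p using card_mono_tuples[OF A r1] by simp
    have ch: "real (card (B A)) * lam powr (a * m) \<le> (real N ^ r * (1 - (1 - lam) * p)) ^ m"
      unfolding B_def using chernoff_count[OF S pS l0 l1, of m "a * m"] by simp
    have lp: "lam powr (a * m) = (lam powr a) ^ m"
      using l0 by (simp add: powr_powr[symmetric] powr_realpow)
    have lpi: "lam powr (-a) * lam powr a = 1" using l0 by (simp add: powr_add[symmetric])
    have pos: "0 < (lam powr a) ^ m" using l0 by simp
    have "real (card (B A)) = real (card (B A)) * (lam powr a) ^ m * (lam powr (-a)) ^ m"
    proof -
      have "(lam powr a) ^ m * (lam powr (-a)) ^ m = 1" using lpi by (simp add: power_mult_distrib[symmetric] mult.commute)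
      then show ?thesis by (simp add: mult.assoc)
    qed
    also have "\<dots> \<le> (real N ^ r * (1 - (1 - lam) * p)) ^ m * (lam powr (-a)) ^ m"
      using ch lp l0 by (intro mult_right_mono) auto
    also have "\<dots> = real N ^ (r * m) * qq ^ m"
    proof -
      have g: "(x * z) ^ m * w ^ m = x ^ m * (w * z) ^ m" for x z w :: real
        by (simp add: power_mult_distrib)
      have "(real N ^ r) ^ m = real N ^ (r * m)" by (simp add: power_mult)
      then show ?thesis unfolding qq_def using g[of "real N ^ r" "1 - (1 - lam) * p" "lam powr (-a)"] by simp
    qed
    finally show ?thesis .
  qed
  have "{X\<in>OM N r m. \<exists>A\<in>Pow {..<N}. real (card {i\<in>{..<m}. X i \<in> SA N r A}) < a * m} = (\<Union>A\<in>Pow {..<N}. B A)"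
    unfolding B_def by blast
  then have "card {X\<in>OM N r m. \<exists>A\<in>Pow {..<N}. real (card {i\<in>{..<m}. X i \<in> SA N r A}) < a * m}
       \<le> (\<Sum>A\<in>Pow {..<N}. card (B A))" by (simp add: card_UN_le)
  then have "real (card {X\<in>OM N r m. \<exists>A\<in>Pow {..<N}. real (card {i\<in>{..<m}. X i \<in> SA N r A}) < a * m})
       \<le> (\<Sum>A\<in>Pow {..<N}. real (card (B A)))" by (simp only: of_nat_le_iff of_nat_sum[symmetric])
  also have "\<dots> \<le> (\<Sum>A\<in>Pow {..<N}. real N ^ (r * m) * qq ^ m)" using eachA by (intro sum_mono) auto
  also have "\<dots> = 2 ^ N * (real N ^ (r * m) * qq ^ m)" by (simp add: card_Pow)
  also have "\<dots> \<le> 2 ^ N * (real N ^ (r * m) * (1/4) ^ N)"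
  proof -
    have "qq ^ m = (qq ^ C) ^ N" unfolding m by (simp add: power_mult)
    also have "\<dots> \<le> (1/4) ^ N" using q qq0 unfolding qq_def by (intro power_mono) auto
    finally show ?thesis by (intro mult_left_mono) auto
  qed
  also have "\<dots> = real N ^ (r * m) * (1/2) ^ N"
  proof -
    have "(2::real) ^ N * (1/4) ^ N = (1/2) ^ N" by (simp add: power_mult_distrib[symmetric])
    then show ?thesis by (simp add: algebra_simps)
  qed
  finally show ?thesis .
qed

lemma exists_X:
  fixes lam p a :: real
  assumes r2: "2 \<le> r" and N2: "2 \<le> N" and m: "m = C * N" and l0: "0 < lam" and l1: "lam < 1"
    and p: "p = 2 / 2 ^ r" and q: "(lam powr (-a) * (1 - (1-lam)*p)) ^ C \<le> 1/4" and C1: "1 \<le> C"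
  shows "\<exists>X\<in>OM N r m. (\<forall>A\<in>Pow {..<N}. a * m \<le> real (card {i\<in>{..<m}. X i \<in> SA N r A}))
             \<and> Wt r m N L X \<le> 2 * Kc C r L"
proof -
  define B1 where "B1 = {X\<in>OM N r m. \<exists>A\<in>Pow {..<N}. real (card {i\<in>{..<m}. X i \<in> SA N r A}) < a * m}"
  define B2 where "B2 = {X\<in>OM N r m. 2 * Kc C r L < Wt r m N L X}"
  define T where "T = N ^ (r * m)"
  have T0: "0 < T" unfolding T_def using N2 by simp
  have c1: "real (card B1) \<le> real T * (1/2) ^ N"
    unfolding B1_def T_def using bad1_bound[OF _ m l0 l1 p q] r2 by simp
  have "(1/2::real) ^ N \<le> (1/2) ^ 2" using N2 by (intro power_decreasing) auto
  then have "real T * (1/2) ^ N \<le> real T * (1/2) ^ 2" by (intro mult_left_mono) auto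
  then have c1': "real (card B1) \<le> real T / 4" using c1 by (simp add: power2_eq_square)
  have Kpos: "0 < Kc C r L" unfolding Kc_def using C1 r2 by simp
  have "card B2 * (2 * Kc C r L) \<le> (\<Sum>X\<in>B2. Wt r m N L X)"
  proof -
    have "(\<Sum>X\<in>B2. 2 * Kc C r L) \<le> (\<Sum>X\<in>B2. Wt r m N L X)" unfolding B2_def by (intro sum_mono) auto
    then show ?thesis by simp
  qed
  also have "\<dots> \<le> (\<Sum>X\<in>OM N r m. Wt r m N L X)" unfolding B2_def by (intro sum_mono2) (auto simp: finite_OM)
  also have "\<dots> \<le> Kc C r L * T" unfolding T_def by (rule sum_Wt[OF m r2])
  finally have "card B2 * 2 * Kc C r L \<le> T * Kc C r L" by (simp add: algebra_simps)
  then have c2: "card B2 * 2 \<le> T" using Kpos by simp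
  have "card (B1 \<union> B2) \<le> card B1 + card B2" by (rule card_Un_le)
  then have u: "real (card (B1 \<union> B2)) \<le> real (card B1) + real (card B2)"
    by (simp only: of_nat_add[symmetric] of_nat_le_iff)
  have "real (card B2 * 2) \<le> real T" using c2 by (simp only: of_nat_le_iff)
  then have "real (card B2) \<le> real T / 2" by simp
  then have "real (card (B1 \<union> B2)) \<le> real T / 4 + real T / 2" using u c1' by linarith
  also have "\<dots> < real T" using T0 by simp
  finally have "card (B1 \<union> B2) < card (OM N r m)" unfolding T_def by (simp add: card_OM)
  moreover have "finite (B1 \<union> B2)" unfolding B1_def B2_def using finite_OM by simp
  ultimately have "\<not> OM N r m \<subseteq> B1 \<union> B2"
  proof (intro notI)
    assume lt: "card (B1 \<union> B2) < card (OM N r m)" and fin: "finite (B1 \<union> B2)" and sub: "OM N r m \<subseteq> B1 \<union> B2"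
    have "card (OM N r m) \<le> card (B1 \<union> B2)" by (rule card_mono[OF fin sub])
    then show False using lt by simp
  qed
  then obtain X where X: "X \<in> OM N r m" "X \<notin> B1" "X \<notin> B2" by blast
  have g1: "\<forall>A\<in>Pow {..<N}. a * m \<le> real (card {i\<in>{..<m}. X i \<in> SA N r A})"
    using X(1,2) unfolding B1_def by (simp add: not_less)
  have g2: "Wt r m N L X \<le> 2 * Kc C r L" using X(1,3) unfolding B2_def by (simp add: not_less)
  show ?thesis using X(1) g1 g2 by blast
qed

lemma two_choose2: "2 * (n choose 2) = n * (n - 1)"
proof (induction n)
  case 0 then show ?case by simp
next
  case (Suc n)
  have "Suc n choose 2 = n + (n choose 2)" by (simp add: numeral_2_eq_2)
  then show ?case using Suc by (cases n) (auto simp: algebra_simps)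
qed

lemma final_ineq:
  fixes d e p :: real
  assumes d0: "0 < d" and d1: "d \<le> 1/2" and de: "d \<le> e/4" and p0: "0 < p" and p1: "p \<le> 1/4"
  shows "1 - (1 - d) * p \<le> (1 - p) * (1 + e) * (1 - d)"
proof -
  have e0: "0 < e" using d0 de by simp
  have "e * d \<le> e * (1/2)" using d1 e0 by (intro mult_left_mono) auto
  then have "(1 + e) * (1 - d) \<ge> 1 + e/4" using de by (simp add: algebra_simps)
  then have "(1 - p) * ((1 + e) * (1 - d)) \<ge> (1 - p) * (1 + e/4)" using p1 by (intro mult_left_mono) auto
  moreover have "(1 - p) * (1 + e/4) \<ge> 1 - p + 3 * e / 16"
  proof -
    have "p * e \<le> (1/4) * e" using p1 e0 by (intro mult_right_mono) auto
    then show ?thesis by (simp add: algebra_simps)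
  qed
  ultimately have A: "(1 - p) * (1 + e) * (1 - d) \<ge> 1 - p + 3 * e / 16" by (simp add: mult.assoc)
  have "d * p \<le> (e/4) * (1/4)" using de p1 d0 p0 by (intro mult_mono) auto
  moreover have "1 - (1 - d) * p = 1 - p + d * p" by (simp add: algebra_simps)
  ultimately show ?thesis using A e0 by linarith
qed

lemma graph_from_X:
  fixes a d :: real
  assumes r2: "2 \<le> r" and rL: "r < L" and XO: "X \<in> OM N r m" and m1: "1 \<le> m"
    and mono: "\<forall>A\<in>Pow {..<N}. a * m \<le> real (card {i\<in>{..<m}. X i \<in> SA N r A})"
    and wt: "real (Wt r m N L X) \<le> d * m" and d1: "d \<le> 1/2"
  shows "\<exists>(V :: nat set) E R. simple_graph V E \<and> E \<noteq> {} \<and> cycle_free_len E L \<and>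
           card E = R * (r choose 2) \<and> (1 - d) * m \<le> real R \<and>
           (\<forall>H \<subseteq> E. bipartite V H \<and> girth_gt H L \<longrightarrow> real (card H) \<le> real (r - 1) * (m * (1 - a)))"
proof -
  define Del where "Del = Deg r m X \<union> (\<Union>j\<in>{2..L}. \<Union>w\<in>Wits r m N j X. set (fst w))"
  define G where "G = {..<m} - Del"
  define K where "K = KX r X"
  have XU: "\<And>i. i < m \<Longrightarrow> X i \<in> UU N r" using XO unfolding OM_def by (auto simp: PiE_iff)
  have KN: "\<And>i. i < m \<Longrightarrow> K i \<subseteq> {..<N}" using XU unfolding K_def KX_def UU_def by (auto simp: PiE_iff)
  have finW: "\<And>j. finite (Wits r m N j X)" unfolding Wits_def using finite_Cand by simp
  have DelW: "card Del \<le> Wt r m N L X"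
  proof -
    have "card Del \<le> card (Deg r m X) + card (\<Union>j\<in>{2..L}. \<Union>w\<in>Wits r m N j X. set (fst w))"
      unfolding Del_def by (rule card_Un_le)
    also have "card (\<Union>j\<in>{2..L}. \<Union>w\<in>Wits r m N j X. set (fst w)) \<le> (\<Sum>j\<in>{2..L}. card (\<Union>w\<in>Wits r m N j X. set (fst w)))"
      by (rule card_UN_le) simp
    also have "\<dots> \<le> (\<Sum>j\<in>{2..L}. \<Sum>w\<in>Wits r m N j X. card (set (fst w)))"
      by (intro sum_mono card_UN_le finW)
    also have "\<dots> \<le> (\<Sum>j\<in>{2..L}. \<Sum>w\<in>Wits r m N j X. L)"
    proof (intro sum_mono)
      fix j w assume j: "j \<in> {2..L}" and w: "w \<in> Wits r m N j X"
      have "length (fst w) = j" using w unfolding Wits_def Cand_def by auto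
      then show "card (set (fst w)) \<le> L" using j card_length[of "fst w"] by simp
    qed
    also have "\<dots> = L * (\<Sum>j\<in>{2..L}. card (Wits r m N j X))" by (simp add: sum_distrib_left mult.commute)
    finally show ?thesis unfolding Wt_def by simp
  qed
  have Delm: "Del \<subseteq> {..<m}" unfolding Del_def Deg_def Wits_def Cand_def by auto
  have finDel: "finite Del" using Delm finite_subset by blast
  have cG: "card G = m - card Del" unfolding G_def using Delm by (simp add: card_Diff_subset finDel)
  have "real (card Del) \<le> real (Wt r m N L X)" using DelW by (simp only: of_nat_le_iff)
  then have cDel: "real (card Del) \<le> d * m" using wt by linarith
  have cDm: "card Del \<le> m" using Delm card_mono[OF finite_lessThan Delm] by simp
  have RG: "(1 - d) * m \<le> real (card G)" using cG cDel cDm by (simp add: of_nat_diff algebra_simps)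
  have Gpos: "0 < card G"
  proof -
    have "0 < (1 - d) * m" using d1 m1 by simp
    then show ?thesis using RG by simp
  qed
  have finG: "finite G" unfolding G_def by simp
  have cK: "\<forall>i\<in>G. card (K i) = r"
  proof
    fix i assume "i \<in> G"
    then have "i < m" "inj_on (X i) {..<r}" unfolding G_def Del_def Deg_def by auto
    then show "card (K i) = r" unfolding K_def KX_def by (simp add: card_image)
  qed
  have fK: "\<forall>i\<in>G. finite (K i)" unfolding K_def KX_def by simp
  have nowit: "\<forall>is ws. wit K is ws \<and> distinct is \<and> 2 \<le> length is \<and> length is \<le> L \<and> set is \<subseteq> G \<longrightarrow> False"
  proof (intro allI impI)
    fix "is" ws assume h: "wit K is ws \<and> distinct is \<and> 2 \<le> length is \<and> length is \<le> L \<and> set is \<subseteq> G"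
    define j where "j = length is"
    have sm: "set is \<subseteq> {..<m}" using h unfolding G_def by auto
    have lw: "length ws = j" and dws: "distinct ws" using h unfolding wit_def j_def by auto
    have sw: "set ws \<subseteq> {..<N}"
    proof
      fix x assume "x \<in> set ws"
      then obtain l where l: "l < j" "ws!l = x" using lw by (auto simp: in_set_conv_nth)
      then have "x \<in> K (is!l)" using h unfolding wit_def j_def by auto
      moreover have "is!l \<in> set is" using l unfolding j_def by simp
      then have "is!l < m" using sm by auto
      ultimately show "x \<in> {..<N}" using KN by blast
    qed
    have "(is, ws) \<in> Cand m N j" unfolding Cand_def using h lw dws sw sm unfolding j_def by simp
    then have iw: "(is, ws) \<in> Wits r m N j X" unfolding Wits_def using h unfolding K_def by simp
    have jL: "j \<in> {2..L}" using h unfolding j_def by auto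
    have "set (fst (is, ws)) \<subseteq> (\<Union>w\<in>Wits r m N j X. set (fst w))" by (rule UN_upper[OF iw])
    then have "set is \<subseteq> (\<Union>w\<in>Wits r m N j X. set (fst w))" by simp
    also have "\<dots> \<subseteq> (\<Union>j\<in>{2..L}. \<Union>w\<in>Wits r m N j X. set (fst w))" by (rule UN_upper[OF jL])
    finally have "set is \<subseteq> Del" unfolding Del_def by blast
    moreover have "is \<noteq> []" using h by auto
    ultimately obtain x where "x \<in> set is" "x \<in> Del" by (meson list.set_sel(1) subsetD)
    then show False using h unfolding G_def by blast
  qed
  define E where "E = (\<Union>i\<in>G. edges_of (K i))"
  have sg: "simple_graph {..<N} E"
    unfolding simple_graph_def E_def edges_of_def using KN unfolding G_def by auto
  have cE: "card E = card G * (r choose 2)"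
    unfolding E_def using card_cliques[OF finG cK fK _ nowit] r2 rL by simp
  have Ene: "E \<noteq> {}"
  proof -
    have "0 < r choose 2" using r2 by simp
    then have "0 < card E" using cE Gpos by simp
    then show ?thesis by auto
  qed
  have cf: "cycle_free_len E L" unfolding E_def by (rule cliques_cfree[OF finG cK fK rL nowit])
  have Hb: "real (card H) \<le> real (r - 1) * (m * (1 - a))"
    if H: "H \<subseteq> E" "bipartite {..<N} H" "girth_gt H L" for H
  proof -
    obtain A where A: "A \<subseteq> {..<N}" "\<forall>e\<in>H. card (e \<inter> A) = 1" using H(2) unfolding bipartite_def by blast
    have hb: "card H \<le> (r - 1) * card {i\<in>G. \<not> mono_set A (K i)}"
      using H_bound[OF finG cK fK rL _ A(2) H(3)] H(1) unfolding E_def by blast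
    define Mo where "Mo = {i\<in>{..<m}. X i \<in> SA N r A}"
    have Mo: "a * m \<le> real (card Mo)" using mono A(1) unfolding Mo_def by blast
    have "{i\<in>G. \<not> mono_set A (K i)} \<subseteq> {..<m} - Mo"
      unfolding G_def Mo_def SA_def K_def KX_def using XU by auto
    then have "card {i\<in>G. \<not> mono_set A (K i)} \<le> card ({..<m} - Mo)" by (intro card_mono) auto
    also have "\<dots> = m - card Mo"
    proof -
      have "Mo \<subseteq> {..<m}" unfolding Mo_def by auto
      moreover have "finite Mo" unfolding Mo_def by simp
      ultimately show ?thesis by (simp add: card_Diff_subset)
    qed
    finally have nm: "card {i\<in>G. \<not> mono_set A (K i)} \<le> m - card Mo" .
    have "Mo \<subseteq> {..<m}" unfolding Mo_def by auto
    then have cMo: "card Mo \<le> m" using card_mono[OF finite_lessThan] by fastforce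
    have "real (card {i\<in>G. \<not> mono_set A (K i)}) \<le> real (m - card Mo)" using nm by (simp only: of_nat_le_iff)
    also have "\<dots> = real m - real (card Mo)" using cMo by (simp add: of_nat_diff)
    also have "\<dots> \<le> m * (1 - a)" using Mo by (simp add: algebra_simps)
    finally have "real (card {i\<in>G. \<not> mono_set A (K i)}) \<le> m * (1 - a)" .
    then have "real (r - 1) * real (card {i\<in>G. \<not> mono_set A (K i)}) \<le> real (r - 1) * (m * (1 - a))"
      by (intro mult_left_mono) auto
    moreover have "real (card H) \<le> real (r - 1) * real (card {i\<in>G. \<not> mono_set A (K i)})"
    proof -
      have "real (card H) \<le> real ((r - 1) * card {i\<in>G. \<not> mono_set A (K i)})" using hb by (simp only: of_nat_le_iff)
      then show ?thesis by simp
    qed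
    ultimately show ?thesis by linarith
  qed
  show ?thesis using sg Ene cf cE RG Hb by blast
qed

theorem theorem3:
  fixes \<epsilon> :: real and k :: nat
  assumes "\<epsilon> > 0" and "k \<ge> 2"
  shows "\<exists>(V :: nat set) (E :: nat set set).
           simple_graph V E \<and> E \<noteq> {} \<and> cycle_free_len E (2 * k) \<and>
           (\<forall>H \<subseteq> E. bipartite V H \<and> girth_gt H (2 * k) \<longrightarrow>
              real (card H) \<le> (1 - 1 / 2 ^ (2 * k - 2)) * (2 / (2 * real k - 1)) * real (card E) * (1 + \<epsilon>))"
proof -
  note eps = assms(1) and k2 = assms(2)
  define r where "r = 2 * k - 1"
  define L where "L = 2 * k"
  have r3: "3 \<le> r" and r2: "2 \<le> r" and rL: "r < L" using k2 unfolding r_def L_def by auto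
  define p where "p = (2::real) / 2 ^ r"
  have pk: "1 / 2 ^ (2 * k - 2) = p"
  proof -
    have "r = Suc (2 * k - 2)" unfolding r_def using k2 by simp
    then show ?thesis unfolding p_def by simp
  qed
  have p0: "0 < p" unfolding p_def by simp
  have p1: "p \<le> 1/4"
  proof -
    have "(2::real) ^ 3 \<le> 2 ^ r" using r3 by (intro power_increasing) auto
    then show ?thesis unfolding p_def by (simp add: divide_le_eq)
  qed
  define d where "d = min (1/2) (\<epsilon>/4)"
  have d0: "0 < d" and d1: "d \<le> 1/2" and de: "d \<le> \<epsilon>/4" unfolding d_def using eps by auto
  define lam where "lam = 1 - d/2"
  have l0: "0 < lam" and l1: "lam < 1" unfolding lam_def using d0 d1 by auto
  define a where "a = (1 - d) * p"
  define qv where "qv = lam powr (-a) * (1 - (1-lam)*p)"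
  have qv1: "qv < 1" unfolding qv_def lam_def a_def using q_lt_1[OF d0 d1 p0] p1 by simp
  obtain C where C: "qv ^ C < 1/4" using real_arch_pow_inv[OF _ qv1, of "1/4"] by auto
  have C1: "1 \<le> C"
  proof (rule ccontr)
    assume "\<not> 1 \<le> C" then have "C = 0" by simp
    then show False using C by simp
  qed
  define KK where "KK = Kc C r L"
  define N where "N = max 2 (nat \<lceil>2 * real KK / (d * real C)\<rceil>)"
  have N2: "2 \<le> N" unfolding N_def by simp
  have NK: "2 * real KK \<le> d * (real C * real N)"
  proof -
    have dC: "0 < d * real C" using d0 C1 by simp
    have "2 * real KK / (d * real C) \<le> real (nat \<lceil>2 * real KK / (d * real C)\<rceil>)" by linarith
    also have "\<dots> \<le> real N" unfolding N_def by simp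
    finally have "2 * real KK / (d * real C) \<le> real N" .
    then have "2 * real KK \<le> real N * (d * real C)" using dC by (simp add: divide_le_eq)
    then show ?thesis by (simp add: algebra_simps)
  qed
  define m where "m = C * N"
  have m1: "1 \<le> m" unfolding m_def using C1 N2 by simp
  have q': "(lam powr (-a) * (1 - (1-lam)*p)) ^ C \<le> 1/4" using C unfolding qv_def by simp
  obtain X where XO: "X \<in> OM N r m"
    and mono: "\<forall>A\<in>Pow {..<N}. a * m \<le> real (card {i\<in>{..<m}. X i \<in> SA N r A})"
    and wX: "Wt r m N L X \<le> 2 * Kc C r L"
    using exists_X[OF r2 N2 m_def l0 l1 p_def q' C1] by blast
  have wt: "real (Wt r m N L X) \<le> d * m"
  proof -
    have "real (Wt r m N L X) \<le> real (2 * KK)" using wX unfolding KK_def by (simp only: of_nat_le_iff)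
    then show ?thesis using NK unfolding m_def by simp
  qed
  have ex: "\<exists>(V :: nat set) E R. simple_graph V E \<and> E \<noteq> {} \<and> cycle_free_len E L \<and>
         card E = R * (r choose 2) \<and> (1 - d) * m \<le> real R \<and>
         (\<forall>H \<subseteq> E. bipartite V H \<and> girth_gt H L \<longrightarrow> real (card H) \<le> real (r - 1) * (m * (1 - a)))"
    by (rule graph_from_X[OF r2 rL XO m1 mono wt d1])
  from ex show ?thesis
  proof (elim exE)
  fix V :: "nat set" and E :: "nat set set" and R :: nat assume GG: "simple_graph V E \<and> E \<noteq> {} \<and> cycle_free_len E L \<and>
         card E = R * (r choose 2) \<and> (1 - d) * m \<le> real R \<and>
         (\<forall>H \<subseteq> E. bipartite V H \<and> girth_gt H L \<longrightarrow> real (card H) \<le> real (r - 1) * (m * (1 - a)))"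
  have G1: "simple_graph V E" using GG by (rule conjunct1)
  have G2: "E \<noteq> {}" using GG[THEN conjunct2] by (rule conjunct1)
  have G3: "cycle_free_len E L" using GG[THEN conjunct2, THEN conjunct2] by (rule conjunct1)
  have G4: "card E = R * (r choose 2)" using GG[THEN conjunct2, THEN conjunct2, THEN conjunct2] by (rule conjunct1)
  have G5: "(1 - d) * m \<le> real R" using GG[THEN conjunct2, THEN conjunct2, THEN conjunct2, THEN conjunct2] by (rule conjunct1)
  have G6: "\<forall>H \<subseteq> E. bipartite V H \<and> girth_gt H L \<longrightarrow> real (card H) \<le> real (r - 1) * (m * (1 - a))"
    using GG[THEN conjunct2, THEN conjunct2, THEN conjunct2, THEN conjunct2] by (rule conjunct2)
  note G = G1 G2 G3 G4 G5 G6
  have rk: "2 * real k - 1 = real r" unfolding r_def using k2 by (simp add: of_nat_diff)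
  have r1: "real (r - 1) = real r - 1" using r2 by (simp add: of_nat_diff)
  have ch: "real (r choose 2) = real r * (real r - 1) / 2"
  proof -
    have "real (2 * (r choose 2)) = real (r * (r - 1))" by (simp only: two_choose2)
    then show ?thesis using r1 by simp
  qed
  have target: "(1 - 1 / 2 ^ (2 * k - 2)) * (2 / (2 * real k - 1)) * real (card E) * (1 + \<epsilon>)
      = (1 - p) * (1 + \<epsilon>) * real R * (real r - 1)"
  proof -
    have rp: "real r > 0" using r2 by simp
    have cEr: "real (card E) = real R * (real r * (real r - 1) / 2)" using G(4) ch by simp
    show ?thesis unfolding pk rk cEr using rp by (simp add: field_simps)
  qed
  have core: "m * (1 - a) \<le> (1 - p) * (1 + \<epsilon>) * real R"
  proof -
    have fi: "1 - (1 - d) * p \<le> (1 - p) * (1 + \<epsilon>) * (1 - d)" by (rule final_ineq[OF d0 d1 de p0 p1])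
    have "m * (1 - a) \<le> m * ((1 - p) * (1 + \<epsilon>) * (1 - d))" unfolding a_def using fi by (intro mult_left_mono) auto
    also have "\<dots> = (1 - p) * (1 + \<epsilon>) * ((1 - d) * m)" by (simp add: algebra_simps)
    also have "\<dots> \<le> (1 - p) * (1 + \<epsilon>) * real R" using G(5) p1 eps by (intro mult_left_mono) auto
    finally show ?thesis .
  qed
  show ?thesis
  proof (intro exI[of _ V] exI[of _ E] conjI)
    show "simple_graph V E" "E \<noteq> {}" by (rule G(1), rule G(2))
    show "cycle_free_len E (2 * k)" using G(3) unfolding L_def .
    show "\<forall>H \<subseteq> E. bipartite V H \<and> girth_gt H (2 * k) \<longrightarrow>
              real (card H) \<le> (1 - 1 / 2 ^ (2 * k - 2)) * (2 / (2 * real k - 1)) * real (card E) * (1 + \<epsilon>)"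
    proof (intro allI impI)
      fix H assume H: "H \<subseteq> E" "bipartite V H \<and> girth_gt H (2 * k)"
      then have "real (card H) \<le> real (r - 1) * (m * (1 - a))" using G(6) unfolding L_def by blast
      also have "\<dots> \<le> (real r - 1) * ((1 - p) * (1 + \<epsilon>) * real R)" unfolding r1 using core r2
        by (intro mult_left_mono) auto
      also have "\<dots> = (1 - 1 / 2 ^ (2 * k - 2)) * (2 / (2 * real k - 1)) * real (card E) * (1 + \<epsilon>)"
        unfolding target by (simp add: algebra_simps)
      finally show "real (card H) \<le> (1 - 1 / 2 ^ (2 * k - 2)) * (2 / (2 * real k - 1)) * real (card E) * (1 + \<epsilon>)" .
    qed
  qed
  qed
qed


end
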